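(* Let $\Gamma$ be a $\Bbbk$-algebra and $\sim$ an equivalence relation on $\mathrm{cfs}(\Gamma)$. If $V$ is a block module and $f:V\to W$ is a $\Gamma$-module map, then $f(V)\subseteq\bigoplus_{B\in\mathrm{Supp}(V)}W(B)$. If moreover $W$ is a block module, then $f=\bigoplus_{B\in\mathrm{cfs}(\Gamma)/{\sim}}f_B$ where $f_B=\pi_B\circ f\circ\iota_B:V(B)\to W(B)$.
   Context: $\mathrm{cfs}(\Gamma)$: maximal two-sided ideals $\mathfrak m$ of $\Gamma$ with $\dim\Gamma/\mathfrak m<\infty$. For a class $B$, $\mathcal W(B)=\{\mathfrak m_1\cdots\mathfrak m_k:k\ge0,\mathfrak m_i\in B\}$; for a $\Gamma$-module $V$, $V(B)=\{v:\mathfrak m v=0$ for some $\mathfrak m\in\mathcal W(B)\}$ (the sum of the $V(B)$ is direct). $V$ is a block module if $V=\bigoplus_BV(B)$, with projections $\pi_B$ and inclusions $\iota_B$; $\mathrm{Supp}(V)=\{B:V(B)\neq0\}$. *)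

theory Defs
  imports Complex_Main
begin

text \<open>A (unital, associative) k-algebra Gamma: the ring structure is the type class
  structure of 'g, the k-action is the scalar multiplication s.\<close>
definition kalgebra :: "('k::field \<Rightarrow> 'g::{ring,monoid_mult} \<Rightarrow> 'g) \<Rightarrow> bool" where
  "kalgebra s \<longleftrightarrow> vector_space s \<and>
     (\<forall>c x y. s c (x * y) = s c x * y \<and> s c (x * y) = x * s c y)"

definition two_sided_ideal :: "'g::{ring,monoid_mult} set \<Rightarrow> bool" where
  "two_sided_ideal I \<longleftrightarrow> 0 \<in> I \<and> (\<forall>x\<in>I. \<forall>y\<in>I. x + y \<in> I) \<and> (\<forall>x\<in>I. - x \<in> I)
     \<and> (\<forall>a x. x \<in> I \<longrightarrow> a * x \<in> I \<and> x * a \<in> I)"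

definition maximal_ideal :: "'g::{ring,monoid_mult} set \<Rightarrow> bool" where
  "maximal_ideal m \<longleftrightarrow> two_sided_ideal m \<and> m \<noteq> UNIV \<and>
     (\<forall>J. two_sided_ideal J \<and> m \<subseteq> J \<longrightarrow> J = m \<or> J = UNIV)"

text \<open>dim_k (Gamma / m) < infinity: Gamma is spanned over k by m together with finitely many
  elements (i.e. the quotient space is spanned by finitely many cosets).\<close>
definition finite_codim :: "('k::field \<Rightarrow> 'g::{ring,monoid_mult} \<Rightarrow> 'g) \<Rightarrow> 'g set \<Rightarrow> bool" where
  "finite_codim s m \<longleftrightarrow> (\<exists>F. finite F \<and> module.span s (F \<union> m) = UNIV)"

definition cfs :: "('k::field \<Rightarrow> 'g::{ring,monoid_mult} \<Rightarrow> 'g) \<Rightarrow> 'g set set" where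
  "cfs s = {m. maximal_ideal m \<and> finite_codim s m}"

definition ideal_mult :: "'g::{ring,monoid_mult} set \<Rightarrow> 'g set \<Rightarrow> 'g set" where
  "ideal_mult I J = {sum_list (map (\<lambda>(a, b). a * b) ps) | ps. set ps \<subseteq> I \<times> J}"

definition Wprod :: "'g::{ring,monoid_mult} set set \<Rightarrow> 'g set set" where
  "Wprod B = {foldr ideal_mult ms UNIV | ms. set ms \<subseteq> B}"

definition gmodule :: "('g::{ring,monoid_mult} \<Rightarrow> 'v::ab_group_add \<Rightarrow> 'v) \<Rightarrow> bool" where
  "gmodule act \<longleftrightarrow> (\<forall>a x y. act a (x + y) = act a x + act a y)
     \<and> (\<forall>a b x. act (a + b) x = act a x + act b x)
     \<and> (\<forall>a b x. act (a * b) x = act a (act b x))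
     \<and> (\<forall>x. act 1 x = x)"

definition gmodule_map ::
  "('g::{ring,monoid_mult} \<Rightarrow> 'v::ab_group_add \<Rightarrow> 'v) \<Rightarrow> ('g \<Rightarrow> 'w::ab_group_add \<Rightarrow> 'w)
     \<Rightarrow> ('v \<Rightarrow> 'w) \<Rightarrow> bool" where
  "gmodule_map actV actW f \<longleftrightarrow> (\<forall>x y. f (x + y) = f x + f y) \<and> (\<forall>a x. f (actV a x) = actW a (f x))"

definition Vpart :: "('g::{ring,monoid_mult} \<Rightarrow> 'v::ab_group_add \<Rightarrow> 'v) \<Rightarrow> 'g set set \<Rightarrow> 'v set" where
  "Vpart act B = {v. \<exists>m\<in>Wprod B. \<forall>x\<in>m. act x v = 0}"

definition is_decomp ::
  "('g::{ring,monoid_mult} \<Rightarrow> 'v::ab_group_add \<Rightarrow> 'v) \<Rightarrow> 'g set set set \<Rightarrow> ('g set set \<Rightarrow> 'v) \<Rightarrow> 'v \<Rightarrow> bool" where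
  "is_decomp act blocks g v \<longleftrightarrow> (\<forall>B. g B \<in> Vpart act B) \<and> finite {B. g B \<noteq> 0}
     \<and> {B. g B \<noteq> 0} \<subseteq> blocks \<and> v = sum g {B. g B \<noteq> 0}"

text \<open>V is a block module: V is the (internal, direct) sum of the V(B), B ranging over blocks.\<close>
definition block_module ::
  "('g::{ring,monoid_mult} \<Rightarrow> 'v::ab_group_add \<Rightarrow> 'v) \<Rightarrow> 'g set set set \<Rightarrow> bool" where
  "block_module act blocks \<longleftrightarrow> (\<forall>v. \<exists>!g. is_decomp act blocks g v)"

text \<open>The projection pi_B : V -> V(B) of a block module (the inclusion iota_B is the identity).\<close>
definition blk_proj ::
  "('g::{ring,monoid_mult} \<Rightarrow> 'v::ab_group_add \<Rightarrow> 'v) \<Rightarrow> 'g set set set \<Rightarrow> 'g set set \<Rightarrow> 'v \<Rightarrow> 'v" where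
  "blk_proj act blocks B v = (THE g. is_decomp act blocks g v) B"

definition Supp ::
  "('g::{ring,monoid_mult} \<Rightarrow> 'v::ab_group_add \<Rightarrow> 'v) \<Rightarrow> 'g set set set \<Rightarrow> 'g set set set" where
  "Supp act blocks = {B \<in> blocks. Vpart act B \<noteq> {0}}"

definition dsum_parts ::
  "('g::{ring,monoid_mult} \<Rightarrow> 'w::ab_group_add \<Rightarrow> 'w) \<Rightarrow> 'g set set set \<Rightarrow> 'w set" where
  "dsum_parts act S = {sum g F | F g. finite F \<and> F \<subseteq> S \<and> (\<forall>B\<in>F. g B \<in> Vpart act B)}"

end

theory Submission
  imports Defs
begin

lemma gm_zero: "gmodule act \<Longrightarrow> act a 0 = 0"
proof -
  assume "gmodule act"
  hence "act a (0 + 0) = act a 0 + act a 0" unfolding gmodule_def by blast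
  thus ?thesis by simp
qed

lemma zero_Vpart: "gmodule act \<Longrightarrow> 0 \<in> Vpart act B"
proof -
  assume g: "gmodule act"
  have "UNIV \<in> Wprod B" unfolding Wprod_def
    by (rule CollectI, rule exI[of _ "[]"]) simp
  then show ?thesis unfolding Vpart_def using gm_zero[OF g] by blast
qed

lemma gmap_zero: "gmodule_map aV aW f \<Longrightarrow> f 0 = 0"
proof -
  assume "gmodule_map aV aW f"
  hence "f (0 + 0) = f 0 + f 0" unfolding gmodule_map_def by blast
  thus ?thesis by simp
qed

lemma gmap_sum: "gmodule_map aV aW f \<Longrightarrow> f (sum g F) = (\<Sum>x\<in>F. f (g x))"
proof (induction F rule: infinite_finite_induct)
  case (infinite A) then show ?case using gmap_zero by simp
next
  case empty then show ?case using gmap_zero by simp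
next
  case (insert x F) then show ?case unfolding gmodule_map_def by simp
qed

lemma gmap_Vpart: "gmodule_map aV aW f \<Longrightarrow> gmodule aW \<Longrightarrow> v \<in> Vpart aV B \<Longrightarrow> f v \<in> Vpart aW B"
proof -
  assume f: "gmodule_map aV aW f" and g: "gmodule aW" and v: "v \<in> Vpart aV B"
  then obtain m where m: "m \<in> Wprod B" "\<forall>x\<in>m. aV x v = 0" unfolding Vpart_def by blast
  have "\<forall>x\<in>m. aW x (f v) = 0"
  proof
    fix x assume "x \<in> m"
    have "aW x (f v) = f (aV x v)" using f unfolding gmodule_map_def by simp
    also have "\<dots> = 0" using m \<open>x \<in> m\<close> gmap_zero[OF f] by simp
    finally show "aW x (f v) = 0" .
  qed
  thus ?thesis using m unfolding Vpart_def by blast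
qed

lemma bm_decomp: "block_module act blocks \<Longrightarrow> is_decomp act blocks (\<lambda>B. blk_proj act blocks B v) v"
  unfolding blk_proj_def block_module_def
  by (metis (no_types, lifting) theI')

lemma bm_proj_self:
  assumes bm: "block_module act blocks" and g: "gmodule act" and B: "B \<in> blocks"
    and w: "w \<in> Vpart act B"
  shows "blk_proj act blocks B w = w"
proof -
  let ?g = "\<lambda>C. if C = B then w else 0"
  have s: "{C. ?g C \<noteq> 0} = (if w = 0 then {} else {B})" by auto
  have "is_decomp act blocks ?g w"
    unfolding is_decomp_def using zero_Vpart[OF g] w B s by auto
  moreover have "is_decomp act blocks (\<lambda>C. blk_proj act blocks C w) w"
    by (rule bm_decomp[OF bm])
  ultimately have "(\<lambda>C. blk_proj act blocks C w) = ?g"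
    using bm unfolding block_module_def by blast
  then show ?thesis by (metis (mono_tags, lifting))
qed

theorem mainTheorem6:
  fixes s :: "'k::field \<Rightarrow> 'g::{ring,monoid_mult} \<Rightarrow> 'g"
    and R :: "('g set \<times> 'g set) set"
    and actV :: "'g \<Rightarrow> 'v::ab_group_add \<Rightarrow> 'v"
    and actW :: "'g \<Rightarrow> 'w::ab_group_add \<Rightarrow> 'w"
    and f :: "'v \<Rightarrow> 'w"
  assumes "kalgebra s"
    and "equiv (cfs s) R"
    and "gmodule actV" and "gmodule actW"
    and "block_module actV (cfs s // R)"
    and "gmodule_map actV actW f"
  shows "(\<forall>v. f v \<in> dsum_parts actW (Supp actV (cfs s // R)))
    \<and> (block_module actW (cfs s // R) \<longrightarrow>
        (\<forall>v. f v = (\<Sum>B\<in>{B \<in> cfs s // R. blk_proj actV (cfs s // R) B v \<noteq> 0}.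
                     blk_proj actW (cfs s // R) B (f (blk_proj actV (cfs s // R) B v)))))"
proof (intro conjI allI impI)
  let ?bl = "cfs s // R"
  fix v
  let ?g = "\<lambda>B. blk_proj actV ?bl B v"
  have d: "is_decomp actV ?bl ?g v" by (rule bm_decomp[OF assms(5)])
  hence gV: "\<And>B. ?g B \<in> Vpart actV B" and fin: "finite {B. ?g B \<noteq> 0}"
    and sub: "{B. ?g B \<noteq> 0} \<subseteq> ?bl" and vs: "v = sum ?g {B. ?g B \<noteq> 0}"
    unfolding is_decomp_def by auto
  have fv: "f v = (\<Sum>B\<in>{B. ?g B \<noteq> 0}. f (?g B))"
    using vs gmap_sum[OF assms(6)] by metis
  have ssub: "{B. ?g B \<noteq> 0} \<subseteq> Supp actV ?bl"
    unfolding Supp_def using sub gV by auto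
  show "f v \<in> dsum_parts actW (Supp actV ?bl)"
    unfolding dsum_parts_def
    using fv fin ssub gmap_Vpart[OF assms(6) assms(4) gV] by blast
  assume bmW: "block_module actW ?bl"
  have eq: "{B \<in> ?bl. ?g B \<noteq> 0} = {B. ?g B \<noteq> 0}" using sub by auto
  have "(\<Sum>B\<in>{B \<in> ?bl. ?g B \<noteq> 0}. blk_proj actW ?bl B (f (?g B)))
      = (\<Sum>B\<in>{B. ?g B \<noteq> 0}. f (?g B))"
    unfolding eq
    by (rule sum.cong[OF refl], rule bm_proj_self[OF bmW assms(4)])
       (use sub gmap_Vpart[OF assms(6) assms(4) gV] in auto)
  then show "f v = (\<Sum>B\<in>{B \<in> ?bl. ?g B \<noteq> 0}. blk_proj actW ?bl B (f (?g B)))"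
    using fv by simp
qed

end
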